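(* Let $\mathbf{X}=(X_1,\ldots,X_d)$ have mutually independent components, $Y=\eta(\mathbf{X})\in\mathcal{Y}$ with $\eta$ measurable, and $k_{\mathcal{Y}}$ a positive definite kernel on $\mathcal{Y}$ such that for every $A\subseteq\{1,\ldots,d\}$ and every $\mathbf{x}_A$, $\mathbb{E}_{\xi\sim\mathrm{P}_{Y\mid\mathbf{X}_A=\mathbf{x}_A}}k_{\mathcal{Y}}(\xi,\xi)<\infty$, and assume $\mathrm{MMD}^2_{\mathrm{tot}}>0$. For $A\subseteq\{1,\ldots,d\}$ define the total MMD-based index $S_A^{T,\mathrm{MMD}}=\sum_{B\subseteq\{1,\ldots,d\},\,B\cap A\neq\emptyset}\mathrm{MMD}^2_B/\mathrm{MMD}^2_{\mathrm{tot}}$. Then $$S_A^{T,\mathrm{MMD}}=\frac{\mathbb{E}_{\mathbf{X}_{-A}}\Big[\mathbb{E}_{\xi\sim\mathrm{P}_{Y\mid\mathbf{X}_{-A}}}k_{\mathcal{Y}}(\xi,\xi)-\mathbb{E}_{\xi,\xi'\sim\mathrm{P}_{Y\mid\mathbf{X}_{-A}}}k_{\mathcal{Y}}(\xi,\xi')\Big]}{\mathrm{MMD}^2_{\mathrm{tot}}}.$$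
   Context: $\mathbf{X}_A$ is the subvector with indices in $A$ and $\mathbf{X}_{-A}$ the subvector with indices in $\{1,\ldots,d\}\setminus A$; $\mathrm{P}_{Y\mid\mathbf{X}_B}$ is the conditional law of $Y$ given $\mathbf{X}_B$ ($=\mathrm{P}_Y$ if $B=\emptyset$), and $\xi,\xi'$ denote independent draws from it. $\mathrm{MMD}^2(\mathrm{P},\mathrm{Q})=\mathbb{E}k_{\mathcal{Y}}(\xi,\xi')-2\mathbb{E}k_{\mathcal{Y}}(\xi,\zeta)+\mathbb{E}k_{\mathcal{Y}}(\zeta,\zeta')$ with $\xi,\xi'\sim\mathrm{P}$, $\zeta,\zeta'\sim\mathrm{Q}$ independent. $\mathrm{MMD}^2_{\mathrm{tot}}=\mathbb{E}k_{\mathcal{Y}}(Y,Y)-\mathbb{E}k_{\mathcal{Y}}(Y,Y')$ with $Y'$ an independent copy of $Y$, and $\mathrm{MMD}^2_B=\sum_{C\subseteq B}(-1)^{|B|-|C|}\mathbb{E}_{\mathbf{X}_C}(\mathrm{MMD}^2(\mathrm{P}_Y,\mathrm{P}_{Y\mid\mathbf{X}_C}))$. *)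

theory Defs
  imports "HOL-Probability.Probability"
begin

text \<open>Index set of the input components (0-based: {0..<d} stands for {1,...,d}).\<close>
abbreviation idx :: "nat \<Rightarrow> nat set" where "idx d \<equiv> {0..<d}"

definition pos_def_kernel :: "'y measure \<Rightarrow> ('y \<Rightarrow> 'y \<Rightarrow> real) \<Rightarrow> bool" where
  "pos_def_kernel K k \<longleftrightarrow>
     (\<forall>x\<in>space K. \<forall>y\<in>space K. k x y = k y x) \<and>
     (\<forall>n::nat. \<forall>xs c. (\<forall>i<n. xs i \<in> space K) \<longrightarrow>
        (\<Sum>i<n. \<Sum>j<n. c i * c j * k (xs i) (xs j)) \<ge> (0::real))"

definition kcross :: "('y \<Rightarrow> 'y \<Rightarrow> real) \<Rightarrow> 'y measure \<Rightarrow> 'y measure \<Rightarrow> real" where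
  "kcross k P Q = (\<integral>\<xi>. (\<integral>\<zeta>. k \<xi> \<zeta> \<partial>Q) \<partial>P)"

definition kdiag :: "('y \<Rightarrow> 'y \<Rightarrow> real) \<Rightarrow> 'y measure \<Rightarrow> real" where
  "kdiag k P = (\<integral>\<xi>. k \<xi> \<xi> \<partial>P)"

definition mmd2 :: "('y \<Rightarrow> 'y \<Rightarrow> real) \<Rightarrow> 'y measure \<Rightarrow> 'y measure \<Rightarrow> real" where
  "mmd2 k P Q = kcross k P P - 2 * kcross k P Q + kcross k Q Q"

definition lawY :: "'a measure \<Rightarrow> (nat \<Rightarrow> 'a \<Rightarrow> 'b) \<Rightarrow> nat \<Rightarrow> ((nat \<Rightarrow> 'b) \<Rightarrow> 'y)
                    \<Rightarrow> 'y measure \<Rightarrow> 'y measure" where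
  "lawY M X d \<eta> K = distr M K (\<lambda>\<omega>. \<eta> (\<lambda>i\<in>idx d. X i \<omega>))"

definition lawX :: "'a measure \<Rightarrow> (nat \<Rightarrow> 'b measure) \<Rightarrow> (nat \<Rightarrow> 'a \<Rightarrow> 'b) \<Rightarrow> nat set
                    \<Rightarrow> (nat \<Rightarrow> 'b) measure" where
  "lawX M N X C = distr M (PiM C N) (\<lambda>\<omega>. \<lambda>i\<in>C. X i \<omega>)"

text \<open>Conditional law of Y given X_C = x (the canonical version under independence of
  the components: fix the coordinates in C to x and integrate the others against the
  product of their marginal laws).\<close>
definition condLaw :: "'a measure \<Rightarrow> (nat \<Rightarrow> 'b measure) \<Rightarrow> (nat \<Rightarrow> 'a \<Rightarrow> 'b) \<Rightarrow> nat
                       \<Rightarrow> ((nat \<Rightarrow> 'b) \<Rightarrow> 'y) \<Rightarrow> 'y measure \<Rightarrow> nat set \<Rightarrow> (nat \<Rightarrow> 'b) \<Rightarrow> 'y measure" where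
  "condLaw M N X d \<eta> K C x =
     distr (PiM (idx d - C) (\<lambda>i. distr M (N i) (X i))) K
           (\<lambda>z. \<eta> (merge C (idx d - C) (x, z)))"

definition MMD2_tot :: "'a measure \<Rightarrow> (nat \<Rightarrow> 'a \<Rightarrow> 'b) \<Rightarrow> nat \<Rightarrow> ((nat \<Rightarrow> 'b) \<Rightarrow> 'y)
                        \<Rightarrow> 'y measure \<Rightarrow> ('y \<Rightarrow> 'y \<Rightarrow> real) \<Rightarrow> real" where
  "MMD2_tot M X d \<eta> K k = kdiag k (lawY M X d \<eta> K) - kcross k (lawY M X d \<eta> K) (lawY M X d \<eta> K)"

definition MMD2_B :: "'a measure \<Rightarrow> (nat \<Rightarrow> 'b measure) \<Rightarrow> (nat \<Rightarrow> 'a \<Rightarrow> 'b) \<Rightarrow> nat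
                      \<Rightarrow> ((nat \<Rightarrow> 'b) \<Rightarrow> 'y) \<Rightarrow> 'y measure \<Rightarrow> ('y \<Rightarrow> 'y \<Rightarrow> real) \<Rightarrow> nat set \<Rightarrow> real" where
  "MMD2_B M N X d \<eta> K k B =
     (\<Sum>C\<in>Pow B. (-1) ^ (card B - card C) *
        (\<integral>x. mmd2 k (lawY M X d \<eta> K) (condLaw M N X d \<eta> K C x) \<partial>(lawX M N X C)))"

definition total_MMD_index :: "'a measure \<Rightarrow> (nat \<Rightarrow> 'b measure) \<Rightarrow> (nat \<Rightarrow> 'a \<Rightarrow> 'b) \<Rightarrow> nat
                      \<Rightarrow> ((nat \<Rightarrow> 'b) \<Rightarrow> 'y) \<Rightarrow> 'y measure \<Rightarrow> ('y \<Rightarrow> 'y \<Rightarrow> real) \<Rightarrow> nat set \<Rightarrow> real" where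
  "total_MMD_index M N X d \<eta> K k A =
     (\<Sum>B\<in>{B. B \<subseteq> idx d \<and> B \<inter> A \<noteq> {}}. MMD2_B M N X d \<eta> K k B) / MMD2_tot M X d \<eta> K k"

end

theory Submission
  imports Defs
begin


lemma mobius_sum:
  fixes f :: "'a set \<Rightarrow> real"
  assumes "finite S"
  shows "(\<Sum>B\<in>Pow S. \<Sum>C\<in>Pow B. (-1) ^ (card B - card C) * f C) = f S"
proof -
  have "(\<Sum>B\<in>Pow S. \<Sum>C\<in>Pow B. (-1) ^ (card B - card C) * f C)
      = (\<Sum>B\<in>Pow S. \<Sum>C | C \<in> Pow S \<and> C \<subseteq> B. (-1) ^ card B * ((-1) ^ card C * f C))"
  proof (rule sum.cong[OF refl])
    fix B assume B: "B \<in> Pow S"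
    have eqP: "{C. C \<in> Pow S \<and> C \<subseteq> B} = Pow B" using B by auto
    show "(\<Sum>C\<in>Pow B. (-1) ^ (card B - card C) * f C) =
          (\<Sum>C | C \<in> Pow S \<and> C \<subseteq> B. (-1) ^ card B * ((-1) ^ card C * f C))"
      unfolding eqP
    proof (rule sum.cong[OF refl])
      fix C assume "C \<in> Pow B"
      then have "card C \<le> card B" using B assms by (meson PowD card_mono finite_subset PowD)
      then show "(-1) ^ (card B - card C) * f C = (-1) ^ card B * ((-1) ^ card C * f C)"
        by (simp add: neg_one_power_add_eq_neg_one_power_diff[symmetric] power_add)
    qed
  qed
  also have "\<dots> = (\<Sum>C\<in>Pow S. (\<Sum>B | B \<subseteq> S \<and> C \<subseteq> B. (-1) ^ card B) * ((-1) ^ card C * f C))"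
    unfolding sum_distrib_left
    by (subst sum.swap_restrict; simp add: assms sum_distrib_right Pow_def)
  also have "\<dots> = (\<Sum>C\<in>Pow S. if C = S then f S else 0)"
  proof (rule sum.cong[OF refl])
    fix C assume C: "C \<in> Pow S"
    show "(\<Sum>B | B \<subseteq> S \<and> C \<subseteq> B. (-1) ^ card B) * ((-1) ^ card C * f C) = (if C = S then f S else 0)"
    proof (cases "C = S")
      case True
      have [simp]: "{B. B \<subseteq> S \<and> S \<subseteq> B} = {S}" by auto
      show ?thesis using True by (simp flip: power_add mult.assoc)
    next
      case False
      then have "C \<subset> S" using C by auto
      then have "(\<Sum>B | B \<subseteq> S \<and> C \<subseteq> B. (-1::real) ^ card B) = 0"
        by (intro sum_alternating_cancels) (simp_all add: assms card_subsupersets_even_odd)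
      then show ?thesis using False by simp
    qed
  qed
  also have "\<dots> = f S" using assms by simp
  finally show ?thesis .
qed

lemma comb_total:
  fixes f :: "nat set \<Rightarrow> real"
  assumes "finite I"
  shows "(\<Sum>B\<in>{B. B \<subseteq> I \<and> B \<inter> A \<noteq> {}}. \<Sum>C\<in>Pow B. (-1) ^ (card B - card C) * f C)
         = f I - f (I - A)"
proof -
  have eq: "{B. B \<subseteq> I \<and> B \<inter> A \<noteq> {}} = Pow I - Pow (I - A)" by auto
  have "(\<Sum>B\<in>Pow I - Pow (I - A). \<Sum>C\<in>Pow B. (-1) ^ (card B - card C) * f C)
     = (\<Sum>B\<in>Pow I. \<Sum>C\<in>Pow B. (-1) ^ (card B - card C) * f C)
       - (\<Sum>B\<in>Pow (I - A). \<Sum>C\<in>Pow B. (-1) ^ (card B - card C) * f C)"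
    by (rule sum_diff) (use assms in auto)
  then show ?thesis unfolding eq using assms by (simp add: mobius_sum)
qed



lemma pdk_sym: "pos_def_kernel K k \<Longrightarrow> a \<in> space K \<Longrightarrow> b \<in> space K \<Longrightarrow> k a b = k b a"
  unfolding pos_def_kernel_def by blast

lemma pdk_psd:
  assumes "pos_def_kernel K k" "\<forall>i<(n::nat). xs i \<in> space K"
  shows "(\<Sum>i<n. \<Sum>j<n. c i * c j * k (xs i) (xs j)) \<ge> (0::real)"
  using assms unfolding pos_def_kernel_def by blast

lemma pdk_nonneg:
  assumes "pos_def_kernel K k" "a \<in> space K"
  shows "0 \<le> k a a"
  using pdk_psd[OF assms(1), of 1 "\<lambda>_. a" "\<lambda>_. 1"] assms(2) by (simp add: card_lessThan)

lemma pdk_bound: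
  assumes "pos_def_kernel K k" "a \<in> space K" "b \<in> space K"
  shows "\<bar>k a b\<bar> \<le> (k a a + k b b) / 2"
proof -
  let ?xs = "\<lambda>i::nat. if i = 0 then a else b"
  have xs: "\<forall>i<2. ?xs i \<in> space K" using assms by auto
  have s: "k a b = k b a" by (rule pdk_sym[OF assms])
  have 1: "(\<Sum>i<2. \<Sum>j<2. (\<lambda>i::nat. if i = 0 then 1 else -1::real) i * (\<lambda>i::nat. if i = 0 then 1 else -1::real) j * k (?xs i) (?xs j)) \<ge> 0"
    by (rule pdk_psd[OF assms(1) xs])
  have 2: "(\<Sum>i<2. \<Sum>j<2. (\<lambda>i::nat. 1::real) i * (\<lambda>i::nat. 1::real) j * k (?xs i) (?xs j)) \<ge> 0"
    by (rule pdk_psd[OF assms(1) xs])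
  from 1 2 s show ?thesis by (simp add: numeral_2_eq_2 lessThan_Suc)
qed

lemma int_bound_help:
  fixes g b :: "'a \<Rightarrow> real"
  assumes "integrable M b" "g \<in> borel_measurable M" "\<And>x. x \<in> space M \<Longrightarrow> \<bar>g x\<bar> \<le> b x"
  shows "integrable M g" "\<bar>integral\<^sup>L M g\<bar> \<le> integral\<^sup>L M b"
proof -
  show ig: "integrable M g"
    by (rule Bochner_Integration.integrable_bound[OF assms(1) assms(2)])
       (use assms(3) in \<open>auto intro!: AE_I2 order_trans[OF _ abs_ge_self]\<close>)
  show "\<bar>integral\<^sup>L M g\<bar> \<le> integral\<^sup>L M b"
  proof -
    have "\<bar>integral\<^sup>L M g\<bar> \<le> (\<integral>x. \<bar>g x\<bar> \<partial>M)"
      using integral_norm_bound[of M g] by simp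
    also have "\<dots> \<le> integral\<^sup>L M b"
      by (rule integral_mono) (use ig assms in auto)
    finally show ?thesis .
  qed
qed

lemma integrable_pair_fst:
  fixes f :: "'a \<Rightarrow> real"
  assumes "prob_space Q" "integrable P f"
  shows "integrable (P \<Otimes>\<^sub>M Q) (\<lambda>p. f (fst p))"
proof -
  have "distr (P \<Otimes>\<^sub>M Q) P fst = P" by (rule prob_space.distr_pair_fst[OF assms(1)])
  with assms(2) have "integrable (distr (P \<Otimes>\<^sub>M Q) P fst) f" by simp
  moreover have "f \<in> borel_measurable P" using assms(2) by auto
  ultimately show ?thesis by (subst (asm) integrable_distr_eq) auto
qed

lemma integrable_pair_snd:
  fixes f :: "'a \<Rightarrow> real"
  assumes "prob_space P" "prob_space Q" "integrable Q f"
  shows "integrable (P \<Otimes>\<^sub>M Q) (\<lambda>p. f (snd p))"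
proof -
  interpret PQ: pair_sigma_finite Q P
    using assms by (simp add: pair_sigma_finite_def prob_space_imp_sigma_finite)
  have "integrable (Q \<Otimes>\<^sub>M P) (\<lambda>p. f (fst p))" by (rule integrable_pair_fst[OF assms(1) assms(3)])
  from PQ.integrable_product_swap[OF this] show ?thesis by (simp add: case_prod_beta')
qed

lemma k_meas_pair:
  assumes km: "(\<lambda>(u, v). k u v) \<in> borel_measurable (K \<Otimes>\<^sub>M K)"
    and "sets P = sets K" "sets Q = sets K"
  shows "(\<lambda>(u, v). k u v) \<in> borel_measurable (P \<Otimes>\<^sub>M Q)"
proof -
  have e: "borel_measurable (P \<Otimes>\<^sub>M Q) = borel_measurable (K \<Otimes>\<^sub>M K)"
    by (rule measurable_cong_sets) (use sets_pair_measure_cong[OF assms(2,3)] in auto)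
  show ?thesis unfolding e by (rule km)
qed

lemma k_meas_row:
  assumes km: "(\<lambda>(u, v). k u v) \<in> borel_measurable (K \<Otimes>\<^sub>M K)"
    and "sets P = sets K" "\<zeta> \<in> space K"
  shows "(\<lambda>\<xi>. k \<xi> \<zeta>) \<in> borel_measurable P"
proof -
  have "(\<lambda>x. case (x, \<zeta>) of (u, v) \<Rightarrow> k u v) \<in> borel_measurable K"
    by (rule measurable_compose[OF measurable_Pair2'[OF assms(3)] km])
  moreover have e: "borel_measurable P = borel_measurable K"
    by (rule measurable_cong_sets) (use assms in auto)
  ultimately show ?thesis by (simp only: e prod.case)
qed

lemma k_meas_diag:
  assumes km: "(\<lambda>(u, v). k u v) \<in> borel_measurable (K \<Otimes>\<^sub>M K)"
    and "sets P = sets K"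
  shows "(\<lambda>\<xi>. k \<xi> \<xi>) \<in> borel_measurable P"
proof -
  have "(\<lambda>x. case (x, x) of (u, v) \<Rightarrow> k u v) \<in> borel_measurable K"
    by (rule measurable_compose[OF _ km]) (rule measurable_Pair; simp)
  moreover have e: "borel_measurable P = borel_measurable K"
    by (rule measurable_cong_sets) (use assms in auto)
  ultimately show ?thesis by (simp only: e prod.case)
qed

lemma integral_half_plus:
  fixes f :: "'a \<Rightarrow> real"
  assumes "prob_space P" "integrable P f"
  shows "(\<integral>x. (f x + c) / 2 \<partial>P) = (integral\<^sup>L P f + c) / 2"
proof -
  interpret prob_space P by fact
  have "(\<integral>x. f x + c \<partial>P) = integral\<^sup>L P f + c"
    by (subst Bochner_Integration.integral_add) (use assms prob_space in auto)
  then show ?thesis by simp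
qed

lemma kint_row:
  assumes pd: "pos_def_kernel K k" and km: "(\<lambda>(u, v). k u v) \<in> borel_measurable (K \<Otimes>\<^sub>M K)"
    and P: "prob_space P" "sets P = sets K" "integrable P (\<lambda>\<xi>. k \<xi> \<xi>)"
    and z: "\<zeta> \<in> space K"
  shows "integrable P (\<lambda>\<xi>. k \<xi> \<zeta>)" "\<bar>\<integral>\<xi>. k \<xi> \<zeta> \<partial>P\<bar> \<le> (kdiag k P + k \<zeta> \<zeta>) / 2"
proof -
  have sp: "space P = space K" using P(2) by (rule sets_eq_imp_space_eq)
  have bi: "integrable P (\<lambda>\<xi>. (k \<xi> \<xi> + k \<zeta> \<zeta>) / 2)"
    by (intro integrable_divide Bochner_Integration.integrable_add P(3)
        finite_measure.integrable_const[OF prob_space.finite_measure[OF P(1)]])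
  have bd: "\<And>\<xi>. \<xi> \<in> space P \<Longrightarrow> \<bar>k \<xi> \<zeta>\<bar> \<le> (k \<xi> \<xi> + k \<zeta> \<zeta>) / 2"
    using pdk_bound[OF pd] z sp by auto
  note H = int_bound_help[OF bi k_meas_row[OF km P(2) z] bd]
  show "integrable P (\<lambda>\<xi>. k \<xi> \<zeta>)" by (rule H(1))
  have "(\<integral>\<xi>. (k \<xi> \<xi> + k \<zeta> \<zeta>) / 2 \<partial>P) = (kdiag k P + k \<zeta> \<zeta>) / 2"
    unfolding kdiag_def by (rule integral_half_plus[OF P(1) P(3)])
  then show "\<bar>\<integral>\<xi>. k \<xi> \<zeta> \<partial>P\<bar> \<le> (kdiag k P + k \<zeta> \<zeta>) / 2" using H(2) by simp
qed

lemma kcross_bound: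
  assumes pd: "pos_def_kernel K k" and km: "(\<lambda>(u, v). k u v) \<in> borel_measurable (K \<Otimes>\<^sub>M K)"
    and P: "prob_space P" "sets P = sets K" "integrable P (\<lambda>\<xi>. k \<xi> \<xi>)"
    and Q: "prob_space Q" "sets Q = sets K" "integrable Q (\<lambda>\<xi>. k \<xi> \<xi>)"
  shows "integrable P (\<lambda>\<xi>. \<integral>\<zeta>. k \<xi> \<zeta> \<partial>Q)" "\<bar>kcross k P Q\<bar> \<le> (kdiag k P + kdiag k Q) / 2"
proof -
  have spP: "space P = space K" using P(2) by (rule sets_eq_imp_space_eq)
  have spQ: "space Q = space K" using Q(2) by (rule sets_eq_imp_space_eq)
  interpret Qs: sigma_finite_measure Q using Q(1) by (rule prob_space_imp_sigma_finite)
  have meas: "(\<lambda>\<xi>. \<integral>\<zeta>. k \<xi> \<zeta> \<partial>Q) \<in> borel_measurable P"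
    by (rule Qs.borel_measurable_lebesgue_integral) (use k_meas_pair[OF km P(2) Q(2)] in simp)
  have bi: "integrable P (\<lambda>\<xi>. (k \<xi> \<xi> + kdiag k Q) / 2)"
    by (intro integrable_divide Bochner_Integration.integrable_add P(3)
        finite_measure.integrable_const[OF prob_space.finite_measure[OF P(1)]])
  have bd: "\<bar>\<integral>\<zeta>. k \<xi> \<zeta> \<partial>Q\<bar> \<le> (k \<xi> \<xi> + kdiag k Q) / 2" if "\<xi> \<in> space P" for \<xi>
  proof -
    have x: "\<xi> \<in> space K" using that spP by simp
    have "(\<integral>\<zeta>. k \<xi> \<zeta> \<partial>Q) = (\<integral>\<zeta>. k \<zeta> \<xi> \<partial>Q)"
      by (rule Bochner_Integration.integral_cong[OF refl]) (use pdk_sym[OF pd] x spQ in auto)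
    then show ?thesis using kint_row(2)[OF pd km Q x] by simp
  qed
  note H = int_bound_help[OF bi meas bd]
  show "integrable P (\<lambda>\<xi>. \<integral>\<zeta>. k \<xi> \<zeta> \<partial>Q)" by (rule H(1))
  have "(\<integral>\<xi>. (k \<xi> \<xi> + kdiag k Q) / 2 \<partial>P) = (kdiag k P + kdiag k Q) / 2"
    unfolding kdiag_def[of k P] by (rule integral_half_plus[OF P(1) P(3)])
  then show "\<bar>kcross k P Q\<bar> \<le> (kdiag k P + kdiag k Q) / 2" using H(2) by (simp add: kcross_def)
qed

lemma kcross_swap:
  assumes pd: "pos_def_kernel K k" and km: "(\<lambda>(u, v). k u v) \<in> borel_measurable (K \<Otimes>\<^sub>M K)"
    and P: "prob_space P" "sets P = sets K" "integrable P (\<lambda>\<xi>. k \<xi> \<xi>)"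
    and Q: "prob_space Q" "sets Q = sets K" "integrable Q (\<lambda>\<xi>. k \<xi> \<xi>)"
  shows "kcross k P Q = (\<integral>\<zeta>. (\<integral>\<xi>. k \<xi> \<zeta> \<partial>P) \<partial>Q)"
proof -
  have spP: "space P = space K" using P(2) by (rule sets_eq_imp_space_eq)
  have spQ: "space Q = space K" using Q(2) by (rule sets_eq_imp_space_eq)
  interpret PQ: pair_sigma_finite P Q
    using P(1) Q(1) by (simp add: pair_sigma_finite_def prob_space_imp_sigma_finite)
  have bi: "integrable (P \<Otimes>\<^sub>M Q) (\<lambda>p. k (fst p) (fst p) / 2 + k (snd p) (snd p) / 2)"
    by (intro Bochner_Integration.integrable_add integrable_divide
          integrable_pair_fst[OF Q(1) P(3)] integrable_pair_snd[OF P(1) Q(1) Q(3)])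
  have bd: "\<bar>(case p of (u, v) \<Rightarrow> k u v)\<bar> \<le> k (fst p) (fst p) / 2 + k (snd p) (snd p) / 2"
    if "p \<in> space (P \<Otimes>\<^sub>M Q)" for p
    using that pdk_bound[OF pd, of "fst p" "snd p"] spP spQ
    by (auto simp: space_pair_measure split: prod.splits)
  have int: "integrable (P \<Otimes>\<^sub>M Q) (\<lambda>(u, v). k u v)"
    by (rule int_bound_help(1)[OF bi k_meas_pair[OF km P(2) Q(2)] bd])
  show ?thesis
    unfolding kcross_def using PQ.Fubini_integral[of k] int by simp
qed



locale mmd =
  fixes M :: "'a measure" and N :: "nat \<Rightarrow> 'b measure" and X :: "nat \<Rightarrow> 'a \<Rightarrow> 'b"
    and d :: nat and \<eta> :: "(nat \<Rightarrow> 'b) \<Rightarrow> 'y" and K :: "'y measure"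
    and k :: "'y \<Rightarrow> 'y \<Rightarrow> real"
  assumes Mp: "prob_space M"
    and indep: "prob_space.indep_vars M N X (idx d)"
    and eta: "\<eta> \<in> measurable (PiM (idx d) N) K"
    and pd: "pos_def_kernel K k"
    and km: "(\<lambda>(u, v). k u v) \<in> borel_measurable (K \<Otimes>\<^sub>M K)"
    and diagint: "\<And>C x. C \<subseteq> idx d \<Longrightarrow> x \<in> space (PiM C N) \<Longrightarrow>
           integrable (condLaw M N X d \<eta> K C x) (\<lambda>\<xi>. k \<xi> \<xi>)"
begin

definition \<mu> :: "nat \<Rightarrow> 'b measure" where
  "\<mu> i = (if i \<in> idx d then distr M (N i) (X i) else return (count_space UNIV) undefined)"

abbreviation "P \<equiv> lawY M X d \<eta> K"
abbreviation "Q C x \<equiv> condLaw M N X d \<eta> K C x"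

lemma Xm: assumes "i \<in> idx d" shows "X i \<in> measurable M (N i)"
proof -
  have "\<forall>i\<in>idx d. X i \<in> measurable M (N i)"
    using indep by (simp only: prob_space.indep_vars_def[OF Mp]) (rule conjunct1)
  then show ?thesis using assms by blast
qed

lemma \<mu>_prob: "prob_space (\<mu> i)"
  unfolding \<mu>_def using Xm prob_space.prob_space_distr[OF Mp] by (auto intro: prob_space_return)

lemma \<mu>_pp: "product_prob_space \<mu>"
  by (simp add: product_prob_space_def product_prob_space_axioms_def product_sigma_finite_def
      \<mu>_prob prob_space_imp_sigma_finite)

lemma PiM_\<mu>: "C \<subseteq> idx d \<Longrightarrow> PiM C (\<lambda>i. distr M (N i) (X i)) = PiM C \<mu>"
  by (rule PiM_cong) (auto simp: \<mu>_def)

lemma sets_PiM_\<mu>: "C \<subseteq> idx d \<Longrightarrow> sets (PiM C \<mu>) = sets (PiM C N)"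
  by (rule sets_PiM_cong) (auto simp: \<mu>_def)

lemma space_PiM_\<mu>: "C \<subseteq> idx d \<Longrightarrow> space (PiM C \<mu>) = space (PiM C N)"
  by (rule sets_eq_imp_space_eq) (rule sets_PiM_\<mu>)

lemma prob_PiM: "prob_space (PiM C \<mu>)"
  by (rule prob_space_PiM) (rule \<mu>_prob)

lemma lawX_eq: assumes "C \<subseteq> idx d" shows "lawX M N X C = PiM C \<mu>"
proof (cases "C = {}")
  case True
  let ?u = "\<lambda>_::nat. undefined :: 'b"
  have r: "(\<lambda>\<omega>. \<lambda>i\<in>{}. X i \<omega>) = (\<lambda>_. ?u)" by (auto simp: fun_eq_iff)
  have "distr M (count_space {?u}) (\<lambda>_. ?u) = count_space {?u}"
  proof (rule measure_eqI)
    fix A assume "A \<in> sets (distr M (count_space {?u}) (\<lambda>_. ?u))"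
    then have "A \<subseteq> {?u}" by simp
    then have "A = {} \<or> A = {?u}" by auto
    then show "emeasure (distr M (count_space {?u}) (\<lambda>_. ?u)) A = emeasure (count_space {?u}) A"
      using prob_space.emeasure_space_1[OF Mp] by (auto simp: emeasure_distr)
  qed simp
  then show ?thesis using True by (simp add: lawX_def PiM_empty r)
next
  case False
  interpret prob_space M by (rule Mp)
  have "indep_vars N X C" by (rule indep_vars_subset[OF indep assms])
  then have "distr M (PiM C N) (\<lambda>x. \<lambda>i\<in>C. X i x) = PiM C (\<lambda>i. distr M (N i) (X i))"
    by (subst (asm) indep_vars_iff_distr_eq_PiM'[OF False]) (use Xm assms in auto)
  then show ?thesis using PiM_\<mu>[OF assms] by (simp add: lawX_def)
qed

lemma eta': "\<eta> \<in> measurable (PiM (idx d) \<mu>) K"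
proof -
  have "measurable (PiM (idx d) \<mu>) K = measurable (PiM (idx d) N) K"
    by (rule measurable_cong_sets) (simp_all add: sets_PiM_\<mu>)
  then show ?thesis using eta by simp
qed

lemma lawY_eq: "P = distr (PiM (idx d) \<mu>) K \<eta>"
proof -
  have rm: "(\<lambda>\<omega>. \<lambda>i\<in>idx d. X i \<omega>) \<in> measurable M (PiM (idx d) N)"
    by (rule measurable_restrict) (rule Xm)
  have "P = distr (distr M (PiM (idx d) N) (\<lambda>\<omega>. \<lambda>i\<in>idx d. X i \<omega>)) K \<eta>"
    by (simp add: lawY_def distr_distr[OF eta rm] comp_def)
  also have "distr M (PiM (idx d) N) (\<lambda>\<omega>. \<lambda>i\<in>idx d. X i \<omega>) = PiM (idx d) \<mu>"
    using lawX_eq[of "idx d"] by (simp add: lawX_def)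
  finally show ?thesis .
qed

lemma merge_meas: "C \<subseteq> idx d \<Longrightarrow> merge C (idx d - C) \<in> measurable (PiM C \<mu> \<Otimes>\<^sub>M PiM (idx d - C) \<mu>) (PiM (idx d) \<mu>)"
  using measurable_merge[of C "idx d - C" \<mu>] by (simp add: Un_absorb1)

lemma hm: "C \<subseteq> idx d \<Longrightarrow> x \<in> space (PiM C \<mu>) \<Longrightarrow>
    (\<lambda>z. merge C (idx d - C) (x, z)) \<in> measurable (PiM (idx d - C) \<mu>) (PiM (idx d) \<mu>)"
  by (rule measurable_compose[OF measurable_Pair1' merge_meas])

lemma hx: "C \<subseteq> idx d \<Longrightarrow> x \<in> space (PiM C \<mu>) \<Longrightarrow>
    (\<lambda>z. \<eta> (merge C (idx d - C) (x, z))) \<in> measurable (PiM (idx d - C) \<mu>) K"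
  by (rule measurable_compose[OF hm eta'])

lemma condLaw_eq: "C \<subseteq> idx d \<Longrightarrow> Q C x = distr (PiM (idx d - C) \<mu>) K (\<lambda>z. \<eta> (merge C (idx d - C) (x, z)))"
  unfolding condLaw_def by (subst PiM_\<mu>) auto

lemma Q_prob: "C \<subseteq> idx d \<Longrightarrow> x \<in> space (PiM C \<mu>) \<Longrightarrow> prob_space (Q C x)"
  unfolding condLaw_eq by (rule prob_space.prob_space_distr[OF prob_PiM hx])

lemma Q_sets: "C \<subseteq> idx d \<Longrightarrow> sets (Q C x) = sets K"
  unfolding condLaw_eq by simp

lemma Q_int: "C \<subseteq> idx d \<Longrightarrow> x \<in> space (PiM C \<mu>) \<Longrightarrow> integrable (Q C x) (\<lambda>\<xi>. k \<xi> \<xi>)"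
  using diagint space_PiM_\<mu> by auto

lemma P_Q0: "P = Q {} (\<lambda>_. undefined)"
proof -
  have "Q {} (\<lambda>_. undefined) = distr (PiM (idx d) \<mu>) K (\<lambda>z. \<eta> (merge {} (idx d) ((\<lambda>_. undefined), z)))"
    using condLaw_eq[of "{}"] by simp
  also have "\<dots> = distr (PiM (idx d) \<mu>) K \<eta>"
  proof (rule distr_cong[OF refl refl])
    fix z assume "z \<in> space (PiM (idx d) \<mu>)"
    then have "z \<in> extensional (idx d)" by (simp add: space_PiM PiE_def)
    then have "merge {} (idx d) ((\<lambda>_. undefined), z) = z"
      by (auto simp: merge_def fun_eq_iff extensional_def)
    then show "\<eta> (merge {} (idx d) ((\<lambda>_. undefined), z)) = \<eta> z" by simp
  qed
  finally show ?thesis using lawY_eq by simp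
qed

lemma P_prob: "prob_space P"
  unfolding lawY_eq by (rule prob_space.prob_space_distr[OF prob_PiM eta'])

lemma P_sets: "sets P = sets K"
  unfolding lawY_eq by simp

lemma P_int: "integrable P (\<lambda>\<xi>. k \<xi> \<xi>)"
  unfolding P_Q0 by (rule Q_int) auto

lemma kdiagK: "(\<lambda>\<xi>. k \<xi> \<xi>) \<in> borel_measurable K"
  by (rule k_meas_diag[OF km refl])

lemma phi_int: "integrable (PiM (idx d) \<mu>) (\<lambda>w. k (\<eta> w) (\<eta> w))"
  using P_int unfolding lawY_eq by (subst (asm) integrable_distr_eq[OF eta' kdiagK])

lemma L:
  fixes g :: "(nat \<Rightarrow> 'b) \<Rightarrow> real"
  assumes C: "C \<subseteq> idx d" and g: "integrable (PiM (idx d) \<mu>) g"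
  shows "integrable (PiM C \<mu>) (\<lambda>x. \<integral>z. g (merge C (idx d - C) (x, z)) \<partial>PiM (idx d - C) \<mu>)"
    and "(\<integral>x. (\<integral>z. g (merge C (idx d - C) (x, z)) \<partial>PiM (idx d - C) \<mu>) \<partial>PiM C \<mu>) = integral\<^sup>L (PiM (idx d) \<mu>) g"
proof -
  interpret PP: product_sigma_finite \<mu> using \<mu>_pp by (simp add: product_prob_space_def)
  interpret PS: pair_sigma_finite "PiM C \<mu>" "PiM (idx d - C) \<mu>"
    by (simp add: pair_sigma_finite_def prob_space_imp_sigma_finite prob_PiM)
  have fin: "finite C" "finite (idx d - C)" using C finite_subset by auto
  have dm: "distr (PiM C \<mu> \<Otimes>\<^sub>M PiM (idx d - C) \<mu>) (PiM (idx d) \<mu>) (merge C (idx d - C)) = PiM (idx d) \<mu>"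
    using PP.distr_merge[of C "idx d - C"] fin C by (simp add: Un_absorb1)
  have gm: "g \<in> borel_measurable (PiM (idx d) \<mu>)" using g by auto
  have int2: "integrable (PiM C \<mu> \<Otimes>\<^sub>M PiM (idx d - C) \<mu>) (\<lambda>p. g (merge C (idx d - C) p))"
    using g dm integrable_distr_eq[OF merge_meas[OF C] gm] by simp
  show "integrable (PiM C \<mu>) (\<lambda>x. \<integral>z. g (merge C (idx d - C) (x, z)) \<partial>PiM (idx d - C) \<mu>)"
    using PS.integrable_fst'[OF int2] by simp
  have "integral\<^sup>L (PiM (idx d) \<mu>) g = integral\<^sup>L (PiM C \<mu> \<Otimes>\<^sub>M PiM (idx d - C) \<mu>) (\<lambda>p. g (merge C (idx d - C) p))"
    using integral_distr[OF merge_meas[OF C] gm] dm by simp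
  then show "(\<integral>x. (\<integral>z. g (merge C (idx d - C) (x, z)) \<partial>PiM (idx d - C) \<mu>) \<partial>PiM C \<mu>) = integral\<^sup>L (PiM (idx d) \<mu>) g"
    using PS.integral_fst'[OF int2] by simp
qed

lemma k_comp:
  assumes "f \<in> measurable L K" "g \<in> measurable L K"
  shows "(\<lambda>q. k (f q) (g q)) \<in> borel_measurable L"
  using measurable_compose[OF measurable_Pair[OF assms] km] by simp

lemma diag_eq:
  assumes C: "C \<subseteq> idx d" and x: "x \<in> space (PiM C \<mu>)"
  shows "kdiag k (Q C x) = (\<integral>z. k (\<eta> (merge C (idx d - C) (x, z))) (\<eta> (merge C (idx d - C) (x, z))) \<partial>PiM (idx d - C) \<mu>)"
  unfolding kdiag_def condLaw_eq[OF C] by (rule integral_distr[OF hx[OF C x] kdiagK])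

lemma T1:
  assumes C: "C \<subseteq> idx d"
  shows "integrable (PiM C \<mu>) (\<lambda>x. kdiag k (Q C x))"
    and "(\<integral>x. kdiag k (Q C x) \<partial>PiM C \<mu>) = kdiag k P"
proof -
  note L1 = L[OF C phi_int]
  show "integrable (PiM C \<mu>) (\<lambda>x. kdiag k (Q C x))"
    using L1(1) by (subst Bochner_Integration.integrable_cong[OF refl diag_eq[OF C]]) auto
  have "kdiag k P = (\<integral>w. k (\<eta> w) (\<eta> w) \<partial>PiM (idx d) \<mu>)"
    unfolding kdiag_def lawY_eq by (rule integral_distr[OF eta' kdiagK])
  then show "(\<integral>x. kdiag k (Q C x) \<partial>PiM C \<mu>) = kdiag k P"
    using L1(2) by (subst Bochner_Integration.integral_cong[OF refl diag_eq[OF C]]) auto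
qed

definition \<psi> :: "'y \<Rightarrow> real" where "\<psi> \<zeta> = (\<integral>\<xi>. k \<xi> \<zeta> \<partial>P)"

lemma psi_meas: "\<psi> \<in> borel_measurable K"
proof -
  interpret Ps: sigma_finite_measure P using P_prob by (rule prob_space_imp_sigma_finite)
  have a: "(\<lambda>(u, v). k u v) \<in> borel_measurable (K \<Otimes>\<^sub>M P)" by (rule k_meas_pair[OF km refl P_sets])
  have "(\<lambda>(\<zeta>, \<xi>). k \<xi> \<zeta>) \<in> borel_measurable (K \<Otimes>\<^sub>M P)"
  proof (subst measurable_cong)
    fix w assume "w \<in> space (K \<Otimes>\<^sub>M P)"
    then show "(case w of (\<zeta>, \<xi>) \<Rightarrow> k \<xi> \<zeta>) = (case w of (u, v) \<Rightarrow> k u v)"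
      using pdk_sym[OF pd] sets_eq_imp_space_eq[OF P_sets] by (auto simp: space_pair_measure)
  qed (rule a)
  then show ?thesis unfolding \<psi>_def[abs_def] by (rule Ps.borel_measurable_lebesgue_integral)
qed

lemma psi_bound: "\<zeta> \<in> space K \<Longrightarrow> \<bar>\<psi> \<zeta>\<bar> \<le> (kdiag k P + k \<zeta> \<zeta>) / 2"
  unfolding \<psi>_def by (rule kint_row(2)[OF pd km P_prob P_sets P_int])

lemma psi_int: "integrable (PiM (idx d) \<mu>) (\<lambda>w. \<psi> (\<eta> w))"
proof -
  have bi: "integrable (PiM (idx d) \<mu>) (\<lambda>w. (kdiag k P + k (\<eta> w) (\<eta> w)) / 2)"
    using phi_int prob_space.finite_measure[OF prob_PiM]
    by (intro integrable_divide Bochner_Integration.integrable_add finite_measure.integrable_const) auto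
  show ?thesis
    by (rule int_bound_help(1)[OF bi measurable_compose[OF eta' psi_meas]])
       (use psi_bound measurable_space[OF eta'] in auto)
qed

lemma T2:
  assumes C: "C \<subseteq> idx d"
  shows "integrable (PiM C \<mu>) (\<lambda>x. kcross k P (Q C x))"
    and "(\<integral>x. kcross k P (Q C x) \<partial>PiM C \<mu>) = kcross k P P"
proof -
  have eq: "kcross k P (Q C x) = (\<integral>z. \<psi> (\<eta> (merge C (idx d - C) (x, z))) \<partial>PiM (idx d - C) \<mu>)"
    if x: "x \<in> space (PiM C \<mu>)" for x
  proof -
    have "kcross k P (Q C x) = (\<integral>\<zeta>. \<psi> \<zeta> \<partial>Q C x)"
      unfolding \<psi>_def
      by (rule kcross_swap[OF pd km P_prob P_sets P_int Q_prob[OF C x] Q_sets[OF C] Q_int[OF C x]])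
    also have "\<dots> = (\<integral>z. \<psi> (\<eta> (merge C (idx d - C) (x, z))) \<partial>PiM (idx d - C) \<mu>)"
      unfolding condLaw_eq[OF C] by (rule integral_distr[OF hx[OF C x] psi_meas])
    finally show ?thesis .
  qed
  note L1 = L[OF C psi_int]
  show "integrable (PiM C \<mu>) (\<lambda>x. kcross k P (Q C x))"
    using L1(1) by (subst Bochner_Integration.integrable_cong[OF refl eq]) auto
  have "kcross k P P = (\<integral>\<zeta>. \<psi> \<zeta> \<partial>P)"
    unfolding \<psi>_def by (rule kcross_swap[OF pd km P_prob P_sets P_int P_prob P_sets P_int])
  also have "\<dots> = (\<integral>w. \<psi> (\<eta> w) \<partial>PiM (idx d) \<mu>)"
    unfolding lawY_eq by (rule integral_distr[OF eta' psi_meas])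
  finally show "(\<integral>x. kcross k P (Q C x) \<partial>PiM C \<mu>) = kcross k P P"
    using L1(2) by (subst Bochner_Integration.integral_cong[OF refl eq]) auto
qed

lemma k_meas_col: "a \<in> space K \<Longrightarrow> (\<lambda>\<zeta>. k a \<zeta>) \<in> borel_measurable K"
proof -
  assume a: "a \<in> space K"
  have "(\<lambda>\<zeta>. k ((\<lambda>_. a) \<zeta>) ((\<lambda>\<zeta>. \<zeta>) \<zeta>)) \<in> borel_measurable K"
    by (rule k_comp) (use a in auto)
  then show ?thesis by simp
qed

lemma R_eq:
  assumes C: "C \<subseteq> idx d" and x: "x \<in> space (PiM C \<mu>)"
  shows "kcross k (Q C x) (Q C x) =
    (\<integral>z. (\<integral>z'. k (\<eta> (merge C (idx d - C) (x, z))) (\<eta> (merge C (idx d - C) (x, z'))) \<partial>PiM (idx d - C) \<mu>) \<partial>PiM (idx d - C) \<mu>)"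
proof -
  define h where "h = (\<lambda>z. \<eta> (merge C (idx d - C) (x, z)))"
  have hm: "h \<in> measurable (PiM (idx d - C) \<mu>) K" unfolding h_def by (rule hx[OF C x])
  have Qe: "Q C x = distr (PiM (idx d - C) \<mu>) K h" unfolding h_def by (rule condLaw_eq[OF C])
  define F where "F = (\<lambda>\<xi>. \<integral>\<zeta>. k \<xi> \<zeta> \<partial>Q C x)"
  interpret Qs: sigma_finite_measure "Q C x" using Q_prob[OF C x] by (rule prob_space_imp_sigma_finite)
  have Fm: "F \<in> borel_measurable K"
    unfolding F_def by (rule Qs.borel_measurable_lebesgue_integral) (use k_meas_pair[OF km refl Q_sets[OF C]] in simp)
  have "kcross k (Q C x) (Q C x) = integral\<^sup>L (Q C x) F" by (simp add: kcross_def F_def)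
  also have "\<dots> = integral\<^sup>L (distr (PiM (idx d - C) \<mu>) K h) F" by (simp only: Qe)
  also have "\<dots> = (\<integral>z. F (h z) \<partial>PiM (idx d - C) \<mu>)" by (rule integral_distr[OF hm Fm])
  also have "\<dots> = (\<integral>z. (\<integral>z'. k (h z) (h z') \<partial>PiM (idx d - C) \<mu>) \<partial>PiM (idx d - C) \<mu>)"
  proof (rule Bochner_Integration.integral_cong[OF refl])
    fix z assume z: "z \<in> space (PiM (idx d - C) \<mu>)"
    have hz: "h z \<in> space K" using measurable_space[OF hm z] .
    have "F (h z) = integral\<^sup>L (distr (PiM (idx d - C) \<mu>) K h) (\<lambda>\<zeta>. k (h z) \<zeta>)"
      unfolding F_def by (simp only: Qe)
    also have "\<dots> = (\<integral>z'. k (h z) (h z') \<partial>PiM (idx d - C) \<mu>)"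
      by (rule integral_distr[OF hm k_meas_col[OF hz]])
    finally show "F (h z) = (\<integral>z'. k (h z) (h z') \<partial>PiM (idx d - C) \<mu>)" .
  qed
  finally show ?thesis unfolding h_def .
qed

lemma T3:
  assumes C: "C \<subseteq> idx d"
  shows "integrable (PiM C \<mu>) (\<lambda>x. kcross k (Q C x) (Q C x))"
proof -
  interpret Ds: sigma_finite_measure "PiM (idx d - C) \<mu>" using prob_PiM by (rule prob_space_imp_sigma_finite)
  note [measurable] = merge_meas[OF C] eta'
  have c1: "(\<lambda>q. \<eta> (merge C (idx d - C) (fst q))) \<in> measurable ((PiM C \<mu> \<Otimes>\<^sub>M PiM (idx d - C) \<mu>) \<Otimes>\<^sub>M PiM (idx d - C) \<mu>) K"
    by measurable
  have c2: "(\<lambda>q. \<eta> (merge C (idx d - C) (fst (fst q), snd q))) \<in> measurable ((PiM C \<mu> \<Otimes>\<^sub>M PiM (idx d - C) \<mu>) \<Otimes>\<^sub>M PiM (idx d - C) \<mu>) K"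
    by measurable
  have m1: "(\<lambda>(p, z'). k (\<eta> (merge C (idx d - C) p)) (\<eta> (merge C (idx d - C) (fst p, z')))) \<in>
      borel_measurable ((PiM C \<mu> \<Otimes>\<^sub>M PiM (idx d - C) \<mu>) \<Otimes>\<^sub>M PiM (idx d - C) \<mu>)"
    using k_comp[OF c1 c2] by (simp add: split_beta')
  have m2: "(\<lambda>p. \<integral>z'. k (\<eta> (merge C (idx d - C) p)) (\<eta> (merge C (idx d - C) (fst p, z'))) \<partial>PiM (idx d - C) \<mu>)
      \<in> borel_measurable (PiM C \<mu> \<Otimes>\<^sub>M PiM (idx d - C) \<mu>)"
    by (rule Ds.borel_measurable_lebesgue_integral) (use m1 in simp)
  have Rm: "(\<lambda>x. \<integral>z. (\<integral>z'. k (\<eta> (merge C (idx d - C) (x, z))) (\<eta> (merge C (idx d - C) (x, z'))) \<partial>PiM (idx d - C) \<mu>) \<partial>PiM (idx d - C) \<mu>)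
      \<in> borel_measurable (PiM C \<mu>)"
    by (rule Ds.borel_measurable_lebesgue_integral) (use m2 in \<open>simp add: split_beta'\<close>)
  have bd: "\<bar>\<integral>z. (\<integral>z'. k (\<eta> (merge C (idx d - C) (x, z))) (\<eta> (merge C (idx d - C) (x, z'))) \<partial>PiM (idx d - C) \<mu>) \<partial>PiM (idx d - C) \<mu>\<bar>
      \<le> kdiag k (Q C x)" if x: "x \<in> space (PiM C \<mu>)" for x
    using kcross_bound(2)[OF pd km Q_prob[OF C x] Q_sets[OF C] Q_int[OF C x] Q_prob[OF C x] Q_sets[OF C] Q_int[OF C x]]
      R_eq[OF C x] by simp
  have "integrable (PiM C \<mu>) (\<lambda>x. \<integral>z. (\<integral>z'. k (\<eta> (merge C (idx d - C) (x, z))) (\<eta> (merge C (idx d - C) (x, z'))) \<partial>PiM (idx d - C) \<mu>) \<partial>PiM (idx d - C) \<mu>)"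
    by (rule int_bound_help(1)[OF T1(1)[OF C] Rm bd])
  then show ?thesis
    by (subst Bochner_Integration.integrable_cong[OF refl R_eq[OF C]]) auto
qed

lemma fval:
  assumes C: "C \<subseteq> idx d"
  shows "(\<integral>x. mmd2 k P (Q C x) \<partial>lawX M N X C) = (\<integral>x. kcross k (Q C x) (Q C x) \<partial>PiM C \<mu>) - kcross k P P"
proof -
  interpret Cp: prob_space "PiM C \<mu>" by (rule prob_PiM)
  have i2: "integrable (PiM C \<mu>) (\<lambda>x. kcross k P P - 2 * kcross k P (Q C x))"
    using T2(1)[OF C] by auto
  have "(\<integral>x. mmd2 k P (Q C x) \<partial>lawX M N X C)
      = (\<integral>x. (kcross k P P - 2 * kcross k P (Q C x)) + kcross k (Q C x) (Q C x) \<partial>PiM C \<mu>)"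
    by (simp add: lawX_eq[OF C] mmd2_def)
  also have "\<dots> = (\<integral>x. kcross k P P - 2 * kcross k P (Q C x) \<partial>PiM C \<mu>) + (\<integral>x. kcross k (Q C x) (Q C x) \<partial>PiM C \<mu>)"
    by (rule Bochner_Integration.integral_add[OF i2 T3[OF C]])
  also have "(\<integral>x. kcross k P P - 2 * kcross k P (Q C x) \<partial>PiM C \<mu>) = kcross k P P - 2 * kcross k P P"
  proof -
    have "(\<integral>x. kcross k P P - 2 * kcross k P (Q C x) \<partial>PiM C \<mu>) =
        (\<integral>x. kcross k P P \<partial>PiM C \<mu>) - (\<integral>x. 2 * kcross k P (Q C x) \<partial>PiM C \<mu>)"
      by (rule Bochner_Integration.integral_diff) (use T2(1)[OF C] in auto)
    also have "(\<integral>x. 2 * kcross k P (Q C x) \<partial>PiM C \<mu>) = 2 * kcross k P P"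
      using T2(2)[OF C] by simp
    also have "(\<integral>x. kcross k P P \<partial>PiM C \<mu>) = kcross k P P"
      using Cp.prob_space by simp
    finally show ?thesis .
  qed
  finally show ?thesis by simp
qed

lemma fI: "(\<integral>x. kcross k (Q (idx d) x) (Q (idx d) x) \<partial>PiM (idx d) \<mu>) = kdiag k P"
proof -
  have "(\<integral>x. kcross k (Q (idx d) x) (Q (idx d) x) \<partial>PiM (idx d) \<mu>) = (\<integral>x. kdiag k (Q (idx d) x) \<partial>PiM (idx d) \<mu>)"
  proof (rule Bochner_Integration.integral_cong[OF refl])
    fix x assume x: "x \<in> space (PiM (idx d) \<mu>)"
    show "kcross k (Q (idx d) x) (Q (idx d) x) = kdiag k (Q (idx d) x)"
      using R_eq[OF order_refl x] diag_eq[OF order_refl x]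
      by (simp add: PiM_empty lebesgue_integral_count_space_finite)
  qed
  also have "\<dots> = kdiag k P" by (rule T1(2)) simp
  finally show ?thesis .
qed

end


theorem mainTheorem4:
  fixes M :: "'a measure" and N :: "nat \<Rightarrow> 'b measure" and X :: "nat \<Rightarrow> 'a \<Rightarrow> 'b"
    and d :: nat and \<eta> :: "(nat \<Rightarrow> 'b) \<Rightarrow> 'y" and K :: "'y measure"
    and k :: "'y \<Rightarrow> 'y \<Rightarrow> real" and A :: "nat set"
  assumes "prob_space M"
    and "prob_space.indep_vars M N X (idx d)"
    and "\<eta> \<in> measurable (PiM (idx d) N) K"
    and "pos_def_kernel K k"
    and "(\<lambda>(u, v). k u v) \<in> borel_measurable (K \<Otimes>\<^sub>M K)"
    and "\<And>C x. C \<subseteq> idx d \<Longrightarrow> x \<in> space (PiM C N) \<Longrightarrow>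
           integrable (condLaw M N X d \<eta> K C x) (\<lambda>\<xi>. k \<xi> \<xi>)"
    and "MMD2_tot M X d \<eta> K k > 0"
    and "A \<subseteq> idx d"
  shows "total_MMD_index M N X d \<eta> K k A =
     (\<integral>x. kdiag k (condLaw M N X d \<eta> K (idx d - A) x)
           - kcross k (condLaw M N X d \<eta> K (idx d - A) x) (condLaw M N X d \<eta> K (idx d - A) x)
        \<partial>(lawX M N X (idx d - A))) / MMD2_tot M X d \<eta> K k"
proof -
  interpret mmd M N X d \<eta> K k by (rule mmd.intro[OF assms(1-6)])
  define fv where "fv = (\<lambda>C. \<integral>x. mmd2 k (lawY M X d \<eta> K) (condLaw M N X d \<eta> K C x) \<partial>lawX M N X C)"
  have num: "(\<Sum>B\<in>{B. B \<subseteq> idx d \<and> B \<inter> A \<noteq> {}}. MMD2_B M N X d \<eta> K k B) = fv (idx d) - fv (idx d - A)"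
    unfolding MMD2_B_def fv_def using comb_total[of "idx d" fv A] by (simp add: fv_def)
  have f1: "fv (idx d) = kdiag k (lawY M X d \<eta> K) - kcross k (lawY M X d \<eta> K) (lawY M X d \<eta> K)"
    unfolding fv_def using fval[of "idx d"] fI by simp
  have C: "idx d - A \<subseteq> idx d" by auto
  have f2: "fv (idx d - A) = (\<integral>x. kcross k (condLaw M N X d \<eta> K (idx d - A) x) (condLaw M N X d \<eta> K (idx d - A) x) \<partial>PiM (idx d - A) \<mu>)
      - kcross k (lawY M X d \<eta> K) (lawY M X d \<eta> K)"
    unfolding fv_def by (rule fval[OF C])
  have rhs: "(\<integral>x. kdiag k (condLaw M N X d \<eta> K (idx d - A) x)
           - kcross k (condLaw M N X d \<eta> K (idx d - A) x) (condLaw M N X d \<eta> K (idx d - A) x)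
        \<partial>(lawX M N X (idx d - A)))
      = kdiag k (lawY M X d \<eta> K) - (\<integral>x. kcross k (condLaw M N X d \<eta> K (idx d - A) x) (condLaw M N X d \<eta> K (idx d - A) x) \<partial>PiM (idx d - A) \<mu>)"
    unfolding lawX_eq[OF C]
    by (subst Bochner_Integration.integral_diff[OF T1(1)[OF C] T3[OF C]]) (simp add: T1(2)[OF C])
  show ?thesis
    unfolding total_MMD_index_def num f1 f2 rhs by simp
qed

end
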